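(* Let $K$ be a field of characteristic zero, and let $N_K$ be the number of roots of unity in $K$. Let $F,G\in K[X]$ satisfy $\deg(F)=d>1$ and $F^k=G^k$ for some $k\in\mathbb{N}$. Then $F^n=G^n$ for some $n$ with $1\le n\le N_K$.
   Context: $F^n$ denotes the $n$-th iterate of $F$ under composition; $\mathbb{N}$ is the set of positive integers. *)

theory Defs
  imports "HOL-Computational_Algebra.Polynomial"
begin

definition poly_iter :: "'a::comm_ring_1 poly \<Rightarrow> nat \<Rightarrow> 'a poly" where
  "poly_iter F n = ((\<lambda>p. pcompose F p) ^^ n) [:0, 1:]"

definition roots_of_unity :: "'a::field set" where
  "roots_of_unity = {x. \<exists>m::nat. m > 0 \<and> x ^ m = 1}"

end

theory Submission
  imports Defs
begin

lemma sum_deg_lc: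
  fixes p q :: "'a::field poly"
  assumes "degree p = n" "degree q = n" "lead_coeff p + lead_coeff q \<noteq> 0"
  shows "degree (p + q) = n \<and> lead_coeff (p + q) = lead_coeff p + lead_coeff q"
proof -
  have le: "degree (p+q) \<le> n" using assms degree_add_le by (metis order_refl)
  have c: "coeff (p+q) n = lead_coeff p + lead_coeff q" using assms by simp
  hence "degree (p+q) \<ge> n" using assms(3) le_degree by metis
  with le c show ?thesis by simp
qed

lemma diff_factor:
  fixes Q1 Q2 :: "'a::field_char_0 poly"
  assumes "degree Q1 = m" "degree Q2 = m" "m \<ge> 1" "lead_coeff Q1 = l" "lead_coeff Q2 = l"
  shows "degree p \<ge> 1 \<Longrightarrow> \<exists>S. pcompose p Q1 - pcompose p Q2 = (Q1 - Q2) * S \<and>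
     degree S = m * (degree p - 1) \<and> lead_coeff S = of_nat (degree p) * lead_coeff p * l ^ (degree p - 1)"
proof (induction p)
  case 0
  then show ?case by simp
next
  case (pCons a p)
  have l0: "l \<noteq> 0" proof assume "l = 0" then have "Q1 = 0" using assms(4) by simp then show False using assms(1,3) by simp qed
  have pnz: "p \<noteq> 0" using pCons.prems by (metis degree_pCons_0 not_one_le_zero)
  have dp: "degree (pCons a p) = Suc (degree p)" using pnz by simp
  have lcp: "lead_coeff (pCons a p) = lead_coeff p" using pnz by simp
  have split: "pcompose (pCons a p) Q1 - pcompose (pCons a p) Q2
       = Q1 * (pcompose p Q1 - pcompose p Q2) + (Q1 - Q2) * pcompose p Q2"
    by (simp add: pcompose_pCons algebra_simps)
  have degc: "degree (pcompose p Q2) = m * degree p" using assms by (simp add: degree_pcompose)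
  have lcc: "lead_coeff (pcompose p Q2) = lead_coeff p * l ^ degree p"
    using assms by (simp add: lead_coeff_comp)
  show ?case
  proof (cases "degree p = 0")
    case True
    then obtain e where e: "p = [:e:]" by (metis degree_eq_zeroE)
    show ?thesis
      by (rule exI[of _ "pcompose p Q2"]) (use split e True dp lcp degc lcc in simp)
  next
    case False
    have "\<exists>S. pcompose p Q1 - pcompose p Q2 = (Q1 - Q2) * S \<and>
     degree S = m * (degree p - 1) \<and> lead_coeff S = of_nat (degree p) * lead_coeff p * l ^ (degree p - 1)"
      using pCons.IH False by simp
    then obtain S where S: "pcompose p Q1 - pcompose p Q2 = (Q1 - Q2) * S"
      "degree S = m * (degree p - 1)" "lead_coeff S = of_nat (degree p) * lead_coeff p * l ^ (degree p - 1)"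
      by blast
    have Snz: "S \<noteq> 0" using S(3) False pnz l0 by auto
    have d1: "degree (Q1 * S) = m * degree p" using S(2) Snz assms False
    proof -
      have "m + m*(degree p - 1) = m * degree p" using False by (cases "degree p") auto
      moreover have "Q1 \<noteq> 0" using assms(1,3) by auto
      ultimately show ?thesis using S(2) Snz assms(1) by (simp add: degree_mult_eq)
    qed
    have l1: "lead_coeff (Q1 * S) = of_nat (degree p) * lead_coeff p * l ^ degree p"
    proof -
      have "l * l ^ (degree p - 1) = l ^ degree p" using False by (cases "degree p") auto
      then show ?thesis using S(3) assms by (simp add: lead_coeff_mult algebra_simps)
    qed
    have sum: "lead_coeff (Q1 * S) + lead_coeff (pcompose p Q2) = of_nat (Suc (degree p)) * lead_coeff p * l ^ degree p"
      using l1 lcc by (simp add: algebra_simps)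
    have nz: "of_nat (Suc (degree p)) * lead_coeff p * l ^ degree p \<noteq> (0::'a)" using pnz l0 of_nat_neq_0[where 'a='a] by (simp del: of_nat_Suc)
    from sum_deg_lc[OF d1 degc] sum nz
    have R: "degree (Q1 * S + pcompose p Q2) = m * degree p"
      "lead_coeff (Q1 * S + pcompose p Q2) = of_nat (Suc (degree p)) * lead_coeff p * l ^ degree p" by auto
    show ?thesis
      by (rule exI[of _ "Q1 * S + pcompose p Q2"]) (use split S(1) R dp lcp in \<open>simp add: algebra_simps\<close>)
  qed
qed

lemma commute_unique:
  fixes H Q1 Q2 :: "'a::field_char_0 poly"
  assumes D: "degree H \<ge> 2" and d1: "degree Q1 = m" and d2: "degree Q2 = m" and m: "m \<ge> 1"
    and lc: "lead_coeff Q1 = lead_coeff Q2"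
    and c1: "pcompose H Q1 = pcompose Q1 H" and c2: "pcompose H Q2 = pcompose Q2 H"
  shows "Q1 = Q2"
proof (rule ccontr)
  assume ne: "Q1 \<noteq> Q2"
  define R where "R = Q1 - Q2"
  have Rnz: "R \<noteq> 0" using ne R_def by simp
  obtain S where S: "pcompose H Q1 - pcompose H Q2 = (Q1 - Q2) * S"
     "degree S = m * (degree H - 1)" "lead_coeff S = of_nat (degree H) * lead_coeff H * lead_coeff Q1 ^ (degree H - 1)"
    using diff_factor[OF d1 d2 m refl lc[symmetric], of H] D by (meson one_le_numeral order_trans)
  have Q1nz: "Q1 \<noteq> 0" using d1 m by auto
  have H0: "H \<noteq> 0" using D by auto
  have "lead_coeff S \<noteq> 0" using S(3) Q1nz H0 D by simp
  hence Snz: "S \<noteq> 0" by auto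
  have "pcompose H Q1 - pcompose H Q2 = pcompose R H" using c1 c2 R_def by (simp add: pcompose_diff)
  hence eq: "R * S = pcompose R H" using S(1) R_def by simp
  have "degree (R * S) = degree R + m * (degree H - 1)" using Rnz Snz S(2) by (simp add: degree_mult_eq)
  moreover have "degree (pcompose R H) = degree R * degree H" by (simp add: degree_pcompose)
  ultimately have E: "degree R + m * (degree H - 1) = degree R * degree H" using eq by simp
  have "degree R \<le> m" unfolding R_def using d1 d2 by (metis degree_diff_le order_refl)
  moreover have "coeff R m = 0" unfolding R_def using d1 d2 lc by simp
  ultimately have lt: "degree R < m" using Rnz by (metis le_neq_implies_less leading_coeff_0_iff)
  have "degree R * (degree H - 1) < m * (degree H - 1)"
    using lt D by (intro mult_strict_right_mono) auto
  moreover have "degree R * degree H = degree R + degree R * (degree H - 1)"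
    using D by (cases "degree H") auto
  ultimately show False using E by linarith
qed


lemma iter_0: "poly_iter F 0 = [:0,1:]" by (simp add: poly_iter_def)
lemma iter_Suc: "poly_iter F (Suc n) = pcompose F (poly_iter F n)" by (simp add: poly_iter_def)

lemma pcompose_idL': "pcompose [:0, 1:] q = q" for q :: "'a::comm_ring_1 poly"
  by (simp add: pcompose_pCons)

lemma iter_add: "poly_iter F (m + n) = pcompose (poly_iter F m) (poly_iter F n)"
  for F :: "'a::comm_ring_1 poly"
  by (induction m) (simp_all add: iter_0 iter_Suc pcompose_idL' pcompose_assoc)

lemma iter_comm: "pcompose (poly_iter F a) (poly_iter F b) = pcompose (poly_iter F b) (poly_iter F a)"
  for F :: "'a::comm_ring_1 poly"
  by (simp only: iter_add[symmetric] add.commute)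

lemma iter_deg: "degree (poly_iter F n) = degree F ^ n" for F :: "'a::field poly"
  by (induction n) (simp_all add: iter_0 iter_Suc degree_pcompose)

fun ss :: "nat \<Rightarrow> nat \<Rightarrow> nat" where
  "ss d 0 = 0" | "ss d (Suc n) = 1 + d * ss d n"

lemma lc_iter:
  fixes F G :: "'a::field poly"
  assumes "degree G = degree F" "degree F \<ge> 1"
  shows "lead_coeff (poly_iter G n) = (lead_coeff G / lead_coeff F) ^ (ss (degree F) n) * lead_coeff (poly_iter F n)"
proof (induction n)
  case 0
  then show ?case by (simp add: iter_0)
next
  case (Suc n)
  define d where "d = degree F"
  define u where "u = lead_coeff G / lead_coeff F"
  define X where "X = lead_coeff (poly_iter F n)"
  have F0: "F \<noteq> 0" using assms by auto
  have uG: "lead_coeff G = u * lead_coeff F" using F0 u_def by simp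
  have IH: "lead_coeff (poly_iter G n) = u ^ ss d n * X" using Suc.IH unfolding u_def d_def X_def .
  have pG: "degree (poly_iter G n) > 0" using assms by (simp add: iter_deg)
  have pF: "degree (poly_iter F n) > 0" using assms by (simp add: iter_deg)
  have "lead_coeff (poly_iter G (Suc n)) = lead_coeff G * lead_coeff (poly_iter G n) ^ d"
    using pG assms d_def by (simp add: iter_Suc lead_coeff_comp)
  also have "\<dots> = u * lead_coeff F * (u ^ ss d n * X) ^ d"
    by (simp only: IH uG)
  also have "\<dots> = u ^ ss d (Suc n) * (lead_coeff F * X ^ d)"
    by (simp add: power_mult_distrib power_mult[symmetric] power_add mult.commute mult.left_commute)
  also have "lead_coeff F * X ^ d = lead_coeff (poly_iter F (Suc n))"
    using pF d_def X_def by (simp add: iter_Suc lead_coeff_comp)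
  finally show ?case using u_def d_def by simp
qed

theorem corollary6p4:
  fixes F G :: "'a::field_char_0 poly" and k :: nat
  assumes "degree F > 1"
    and "k \<ge> 1"
    and "poly_iter F k = poly_iter G k"
  shows "\<exists>n. 1 \<le> n \<and> (finite (roots_of_unity :: 'a set) \<longrightarrow> n \<le> card (roots_of_unity :: 'a set))
             \<and> poly_iter F n = poly_iter G n"
proof -
  define d where "d = degree F"
  have d2: "d \<ge> 2" using assms d_def by simp
  have "degree G ^ k = d ^ k" using assms(3) d_def by (metis iter_deg)
  hence dG: "degree G = d" using assms(2) by (simp add: power_eq_iff_eq_base)
  define u where "u = lead_coeff G / lead_coeff F"
  define e where "e n = u ^ ss d n" for n
  have lcI: "lead_coeff (poly_iter G n) = e n * lead_coeff (poly_iter F n)" for n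
    using lc_iter[of G F n] dG d2 d_def e_def u_def by simp
  have lcnz: "lead_coeff (poly_iter F n) \<noteq> 0" for n
  proof
    assume "lead_coeff (poly_iter F n) = 0"
    hence "poly_iter F n = 0" by simp
    hence "degree (poly_iter F n) = 0" by simp
    thus False using d2 d_def by (simp add: iter_deg)
  qed
  have ek: "e k = 1" using lcI[of k] assms(3) lcnz[of k] by simp
  have key: "poly_iter F n = poly_iter G n" if "n \<ge> 1" "e n = 1" for n
  proof (rule commute_unique[where H = "poly_iter F k"])
    show "2 \<le> degree (poly_iter F k)" using d2 d_def assms(2)
    proof -
      have "d ^ 1 \<le> d ^ k" using d2 assms(2) by (intro power_increasing) auto
      then show ?thesis using d2 d_def by (simp add: iter_deg)
    qed
    show "degree (poly_iter F n) = d ^ n" using d_def by (simp add: iter_deg)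
    show "degree (poly_iter G n) = d ^ n" using dG by (simp add: iter_deg)
    show "1 \<le> d ^ n" using d2 by simp
    show "lead_coeff (poly_iter F n) = lead_coeff (poly_iter G n)" using lcI[of n] that by simp
    show "pcompose (poly_iter F k) (poly_iter F n) = pcompose (poly_iter F n) (poly_iter F k)"
      by (rule iter_comm)
    show "pcompose (poly_iter F k) (poly_iter G n) = pcompose (poly_iter G n) (poly_iter F k)"
      unfolding assms(3) by (rule iter_comm)
  qed
  show ?thesis
  proof (cases "finite (roots_of_unity :: 'a set)")
    case False
    then show ?thesis using assms(2,3) by blast
  next
    case True
    define N where "N = card (roots_of_unity :: 'a set)"
    define s where "s = ss d k"
    obtain k' where k': "k = Suc k'" using assms(2) by (cases k) auto
    have s1: "s = 1 + d * ss d k'" using s_def k' by simp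
    define A where "A = {x::'a. x ^ s = 1}"
    have AR: "A \<subseteq> roots_of_unity" using s1 unfolding A_def roots_of_unity_def by auto
    hence finA: "finite A" and cardA: "card A \<le> N" using True N_def by (auto intro: card_mono finite_subset)
    have us: "u ^ s = 1" using ek e_def s_def by simp
    have eA: "e j \<in> A" for j
    proof -
      have "(u ^ ss d j) ^ s = (u ^ s) ^ ss d j" by (simp add: power_mult[symmetric] mult.commute)
      then show ?thesis unfolding A_def e_def using us by simp
    qed
    have u0: "u \<noteq> 0" using us s1 by (cases "u = 0") auto
    have erec: "e (Suc j) = u * e j ^ d" for j unfolding e_def by (simp add: power_add power_mult[symmetric] mult.commute)
    have inj: "x = y" if "x \<in> A" "y \<in> A" "u * x ^ d = u * y ^ d" for x y
    proof -
      have xd: "x ^ d = y ^ d" using that(3) u0 by simp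
      have x0: "x \<noteq> 0" using that(1) s1 unfolding A_def by (cases "x = 0") auto
      have y0: "y \<noteq> 0" using that(2) s1 unfolding A_def by (cases "y = 0") auto
      define z where "z = x / y"
      have zs: "z ^ s = 1" using that(1,2) unfolding A_def z_def by (simp add: power_divide)
      have zd: "z ^ d = 1" using xd y0 unfolding z_def by (simp add: power_divide)
      have "z ^ s = z" using zd s1 by (simp add: power_add power_mult)
      hence "z = 1" using zs by simp
      thus ?thesis using y0 z_def by simp
    qed
    have desc: "e i = e (i + t) \<Longrightarrow> e 0 = e t" for i t
    proof (induction i)
      case 0 then show ?case by simp
    next
      case (Suc i)
      then have "u * e i ^ d = u * e (i + t) ^ d" using erec by simp
      then have "e i = e (i + t)" using inj eA by blast
      then show ?case using Suc.IH by simp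
    qed
    have "\<not> inj_on e {0..N}"
    proof
      assume "inj_on e {0..N}"
      hence "card (e ` {0..N}) = N + 1" by (simp add: card_image)
      moreover have "e ` {0..N} \<subseteq> A" using eA by auto
      hence "card (e ` {0..N}) \<le> card A" using finA by (rule card_mono[rotated])
      ultimately show False using cardA by simp
    qed
    then obtain i j where ij: "i \<in> {0..N}" "j \<in> {0..N}" "i \<noteq> j" "e i = e j"
      unfolding inj_on_def by blast
    obtain a b where ab: "a < b" "b \<le> N" "e a = e b"
    proof (cases "i < j")
      case True then show ?thesis using that ij by auto
    next
      case False then show ?thesis using that[of j i] ij by auto
    qed
    have "e 0 = e (b - a)" using desc[of a "b - a"] ab by simp
    hence "e (b - a) = 1" using e_def by simp
    hence "poly_iter F (b - a) = poly_iter G (b - a)" using key ab by simp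
    moreover have "1 \<le> b - a" "b - a \<le> N" using ab by auto
    ultimately show ?thesis using N_def by blast
  qed
qed

end
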